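(* For the invertible $N$-component coupled KdV hierarchy (defined in the context), the vector fields $K_s$ are local for all $s\in\mathbf Z$.
   Context: Let $N\ge1$, $\partial=\partial/\partial x$, $\partial^{-1}$ a formal inverse of $\partial$. Let $u_0,\dots,u_{N-1}$ be smooth functions of $(x,t)$ (the fields, $u=(u_0,\dots,u_{N-1})^T$), set $u_N=-1$, and let $\varepsilon_1,\dots,\varepsilon_{N-1}$ be real constants, $\varepsilon_0=\varepsilon_N=0$. Put $J_i=\frac14\varepsilon_i\partial^3+\frac12(u_i\partial+\partial u_i)$, so $J_0=\frac12(u_0\partial+\partial u_0)$ and $J_N=-\partial$; $J_0=u_0^{1/2}\partial u_0^{1/2}$ and $J_N$ are invertible. Formal adjoint: $\partial^\dagger=-\partial$, multiplication operators self-adjoint, $(AB)^\dagger=B^\dagger A^\dagger$, transpose for matrices. Let $B_0$ be the $N\times N$ matrix with $(B_0)_{ij}=-J_{i+j-1}$ if $i+j-1\le N$ and $0$ otherwise, and $R$ the $N\times N$ matrix with $R_{ij}=\delta_{i,j+1}$ ($1\le j\le N-1$), $R_{iN}=-J_{i-1}J_N^{-1}$; $R$ is invertible, and $B_r:=R^rB_0$ ($r\in\mathbf Z$). One-forms: $\gamma_0=(0,\dots,0,2)^T$, $\gamma_{-1}=(u_0^{-1/2},0,\dots,0)^T$, $\gamma_s=(R^\dagger)^s\gamma_0$ and $\gamma_{-s}=((R^{-1})^\dagger)^{s-1}\gamma_{-1}$ for $s\ge1$. The hierarchy consists of the flows $u_{t_{-s}}=K_{-s}:=B_r\gamma_{-r-s}$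 ($s\ge1$, any $r>-s$) and $u_{t_s}=K_s:=B_r\gamma_{-r+s+N}$ ($s\ge0$, any $r\le s+N$), these being independent of $r$; in particular $K_{-s}=B_0\gamma_{-s}$, $K_s=B_N\gamma_s=B_0\gamma_{s+N}$, $K_s=R^sK_0$, $K_{-s}=(R^{-1})^{s-1}K_{-1}$, and explicitly the $i$-th component of $K_0$ is $u_{i-1,x}$ (components $i=1,\dots,N$, $u_{-1}=0$). A vector field (or one-form) is local if each component is a function of the fields and finitely many of their $x$-derivatives (no $\partial^{-1}$ appears). *)

theory Defs
  imports "HOL-Analysis.Analysis"
begin

text \<open>Jet coordinates: j i k stands for the k-th x-derivative of the field u_i.\<close>
type_synonym jet = "nat \<Rightarrow> nat \<Rightarrow> real"

definition jet_of :: "(nat \<Rightarrow> real \<Rightarrow> real) \<Rightarrow> real \<Rightarrow> jet" where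
  "jet_of u x = (\<lambda>i k. (deriv ^^ k) (u i) x)"

definition smooth_fn :: "(real \<Rightarrow> real) \<Rightarrow> bool" where
  "smooth_fn f \<longleftrightarrow> (\<forall>k x. (deriv ^^ k) f differentiable (at x))"

text \<open>Admissible field configurations (x-dependence; t is a spectator):
  smooth fields u_0..u_{N-1}, with u_0 > 0 so that u_0^(1/2) makes sense.\<close>
definition admissible :: "nat \<Rightarrow> (nat \<Rightarrow> real \<Rightarrow> real) \<Rightarrow> bool" where
  "admissible N u \<longleftrightarrow> (\<forall>i<N. smooth_fn (u i)) \<and> (\<forall>x. u 0 x > 0)"

definition is_local :: "nat \<Rightarrow> (jet \<Rightarrow> real) \<Rightarrow> bool" where
  "is_local N F \<longleftrightarrow>
     (\<exists>m. \<forall>j j'. (\<forall>i<N. \<forall>k\<le>m. j i k = j' i k) \<longrightarrow> F j = F j')"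

definition fld :: "nat \<Rightarrow> (nat \<Rightarrow> real \<Rightarrow> real) \<Rightarrow> nat \<Rightarrow> real \<Rightarrow> real" where
  "fld N u i x = (if i < N then u i x else if i = N then -1 else 0)"

definition epsc :: "nat \<Rightarrow> (nat \<Rightarrow> real) \<Rightarrow> nat \<Rightarrow> real" where
  "epsc N \<epsilon> i = (if 0 < i \<and> i < N then \<epsilon> i else 0)"

text \<open>J_i g = 1/4 eps_i g''' + 1/2 (u_i g' + (u_i g)') = 1/4 eps_i g''' + u_i g' + 1/2 u_i' g.\<close>
definition Jop :: "nat \<Rightarrow> (nat \<Rightarrow> real) \<Rightarrow> (nat \<Rightarrow> real \<Rightarrow> real) \<Rightarrow> nat
                    \<Rightarrow> (real \<Rightarrow> real) \<Rightarrow> real \<Rightarrow> real" where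
  "Jop N \<epsilon> u i g x =
     epsc N \<epsilon> i / 4 * (deriv ^^ 3) g x + fld N u i x * deriv g x
     + 1 / 2 * deriv (fld N u i) x * g x"

text \<open>K s i (components i = 1..N) is a realisation of the hierarchy:
  K_0 and K_{-1} = B_0 gamma_{-1} as given, K_{s+1} = R K_s (s \<ge> 0) and
  K_{s-1} = R^{-1} K_s (s \<le> -1), where the formal inverses
  J_N^{-1} = -\<partial>^{-1} and J_0^{-1} are realised by differential functions w, z:
  (R V)_i = V_{i-1} + J_{i-1} w with \<partial> w = V_N (V_0 = 0);
  (R^{-1} W)_i = W_{i+1} - J_i z with J_0 z = W_1 (W_{N+1} = 0).\<close>
definition cKdV_hierarchy :: "nat \<Rightarrow> (nat \<Rightarrow> real) \<Rightarrow> (int \<Rightarrow> nat \<Rightarrow> jet \<Rightarrow> real) \<Rightarrow> bool" where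
  "cKdV_hierarchy N \<epsilon> K \<longleftrightarrow>
   (\<forall>u x. admissible N u \<longrightarrow> (\<forall>i\<in>{1..N}.
       K 0 i (jet_of u x) = deriv (u (i - 1)) x \<and>
       K (-1) i (jet_of u x) = - Jop N \<epsilon> u i (\<lambda>y. 1 / sqrt (u 0 y)) x))
   \<and> (\<forall>s\<ge>0. \<exists>w. \<forall>u. admissible N u \<longrightarrow>
         smooth_fn (\<lambda>y. w (jet_of u y)) \<and>
         (\<forall>x. ((\<lambda>y. w (jet_of u y)) has_real_derivative K s N (jet_of u x)) (at x)) \<and>
         (\<forall>x. \<forall>i\<in>{1..N}. K (s + 1) i (jet_of u x) =
              (if i = 1 then 0 else K s (i - 1) (jet_of u x))
              + Jop N \<epsilon> u (i - 1) (\<lambda>y. w (jet_of u y)) x))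
   \<and> (\<forall>s\<le>-1. \<exists>z. \<forall>u. admissible N u \<longrightarrow>
         smooth_fn (\<lambda>y. z (jet_of u y)) \<and>
         (\<forall>x. Jop N \<epsilon> u 0 (\<lambda>y. z (jet_of u y)) x = K s 1 (jet_of u x)) \<and>
         (\<forall>x. \<forall>i\<in>{1..N}. K (s - 1) i (jet_of u x) =
              (if i = N then 0 else K s (i + 1) (jet_of u x))
              - Jop N \<epsilon> u i (\<lambda>y. z (jet_of u y)) x))"

end

theory Submission
  imports Defs
begin


definition dcond :: "nat \<Rightarrow> (jet \<Rightarrow> real) \<Rightarrow> (jet \<Rightarrow> real) \<Rightarrow> bool" where
  "dcond N F G \<longleftrightarrow> (\<forall>u x. admissible N u \<longrightarrow>
      ((\<lambda>y. F (jet_of u y)) has_real_derivative G (jet_of u x)) (at x))"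

coinductive dfun :: "nat \<Rightarrow> (jet \<Rightarrow> real) \<Rightarrow> bool" for N where
  dfunI: "is_local N F \<Longrightarrow> dcond N F G \<Longrightarrow> dfun N G \<Longrightarrow> dfun N F"

definition Dv :: "nat \<Rightarrow> (jet \<Rightarrow> real) \<Rightarrow> jet \<Rightarrow> real" where
  "Dv N F = (SOME G. dcond N F G \<and> dfun N G)"

lemma dfun_local: "dfun N F \<Longrightarrow> is_local N F"
  by (erule dfun.cases) auto

lemma dfun_Dv: assumes "dfun N F" shows "dfun N (Dv N F)" "dcond N F (Dv N F)"
proof -
  from assms obtain G where "dcond N F G \<and> dfun N G" by (cases rule: dfun.cases) auto
  then have "dcond N F (Dv N F) \<and> dfun N (Dv N F)" unfolding Dv_def by (metis (mono_tags, lifting) someI)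
  then show "dfun N (Dv N F)" "dcond N F (Dv N F)" by auto
qed

lemma dfun_deriv:
  assumes "dfun N F" "admissible N u"
  shows "((\<lambda>y. F (jet_of u y)) has_real_derivative Dv N F (jet_of u x)) (at x)"
  using dfun_Dv(2)[OF assms(1)] assms(2) unfolding dcond_def by blast

lemma dfun_deriv_fun:
  assumes "dfun N F" "admissible N u"
  shows "deriv (\<lambda>y. F (jet_of u y)) = (\<lambda>y. Dv N F (jet_of u y))"
  using dfun_deriv[OF assms] by (auto intro!: ext DERIV_imp_deriv)

lemma dfun_derivk:
  assumes "dfun N F" "admissible N u"
  shows "(deriv ^^ k) (\<lambda>y. F (jet_of u y)) = (\<lambda>y. ((Dv N)^^k) F (jet_of u y)) \<and> dfun N (((Dv N)^^k) F)"
proof (induction k)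
  case 0 then show ?case using assms by simp
next
  case (Suc k) then show ?case using dfun_deriv_fun[OF _ assms(2)] dfun_Dv(1) by simp
qed

lemma dfun_smooth:
  assumes "dfun N F" "admissible N u"
  shows "smooth_fn (\<lambda>y. F (jet_of u y))"
  unfolding smooth_fn_def
proof (intro allI)
  fix k x
  have "(deriv ^^ k) (\<lambda>y. F (jet_of u y)) = (\<lambda>y. ((Dv N)^^k) F (jet_of u y))" and d: "dfun N (((Dv N)^^k) F)"
    using dfun_derivk[OF assms] by auto
  then show "(deriv ^^ k) (\<lambda>y. F (jet_of u y)) differentiable (at x)"
    using dfun_deriv[OF d assms(2)] real_differentiable_def by (metis)
qed

lemma is_local_comb:
  assumes "is_local N F" "is_local N G"
  shows "is_local N (\<lambda>j. f (F j) (G j))"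
proof -
  obtain m1 where m1: "\<forall>j j'. (\<forall>i<N. \<forall>k\<le>m1. j i k = j' i k) \<longrightarrow> F j = F j'" using assms(1) is_local_def by blast
  obtain m2 where m2: "\<forall>j j'. (\<forall>i<N. \<forall>k\<le>m2. j i k = j' i k) \<longrightarrow> G j = G j'" using assms(2) is_local_def by blast
  show ?thesis unfolding is_local_def
    by (rule exI[of _ "max m1 m2"]) (metis m1 m2 max.coboundedI1 max.coboundedI2 order.trans)
qed

lemma is_local_const: "is_local N (\<lambda>_. c)" by (auto simp: is_local_def)

lemma is_local_coord: "i < N \<Longrightarrow> is_local N (\<lambda>j. j i k)"
  unfolding is_local_def by (rule exI[of _ k]) auto

lemma is_local_add: "is_local N F \<Longrightarrow> is_local N G \<Longrightarrow> is_local N (\<lambda>j. F j + G j)"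
  by (rule is_local_comb)
lemma is_local_diff: "is_local N F \<Longrightarrow> is_local N G \<Longrightarrow> is_local N (\<lambda>j. F j - G j)"
  by (rule is_local_comb)
lemma is_local_mult: "is_local N F \<Longrightarrow> is_local N G \<Longrightarrow> is_local N (\<lambda>j. F j * G j)"
  by (rule is_local_comb)
lemma is_local_if: "is_local N F \<Longrightarrow> is_local N G \<Longrightarrow> is_local N (\<lambda>j. if P then F j else G j)"
  by (cases P) auto

lemma is_local_sum: "finite S \<Longrightarrow> (\<And>k. k \<in> S \<Longrightarrow> is_local N (f k)) \<Longrightarrow> is_local N (\<lambda>j. \<Sum>k\<in>S. f k j)"
proof (induction S rule: finite_induct)
  case empty then show ?case by (simp add: is_local_const)
next
  case (insert x F) then show ?case using is_local_add[of N "f x" "\<lambda>j. \<Sum>k\<in>F. f k j"] by simp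
qed

lemma dfun_const: "dfun N (\<lambda>_. c::real)"
proof (rule dfun.coinduct[where X="\<lambda>F. \<exists>c. F = (\<lambda>_. c)"])
  show "\<exists>c'. (\<lambda>_. c) = (\<lambda>_. c')" by auto
next
  fix F :: "jet \<Rightarrow> real" assume "\<exists>c. F = (\<lambda>_::jet. c)"
  then obtain c where "F = (\<lambda>_. c)" by auto
  then show "\<exists>F' G. F = F' \<and> is_local N F' \<and> dcond N F' G \<and> ((\<exists>c. G = (\<lambda>_. c)) \<or> dfun N G)"
    by (intro exI[of _ F] exI[of _ "\<lambda>_. 0"]) (auto simp: dcond_def is_local_const)
qed

lemma dfun_coord:
  assumes "i < N" shows "dfun N (\<lambda>j. j i k)"
proof (rule dfun.coinduct[where X="\<lambda>F. \<exists>k. F = (\<lambda>j. j i k)"])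
  show "\<exists>k'. (\<lambda>j. j i k) = (\<lambda>j. j i k')" by auto
next
  fix F :: "jet \<Rightarrow> real" assume "\<exists>k. F = (\<lambda>j::jet. j i k)"
  then obtain k where F: "F = (\<lambda>j. j i k)" by auto
  have "dcond N F (\<lambda>j. j i (Suc k))"
    unfolding dcond_def F jet_of_def
  proof (intro allI impI)
    fix u x assume "admissible N u"
    then have "smooth_fn (u i)" using assms admissible_def by auto
    then have "(deriv ^^ k) (u i) differentiable (at x)" unfolding smooth_fn_def by blast
    then show "((\<lambda>y. (deriv ^^ k) (u i) y) has_real_derivative (deriv ^^ Suc k) (u i) x) (at x)"
      using DERIV_deriv_iff_real_differentiable by auto
  qed
  then show "\<exists>F' G. F = F' \<and> is_local N F' \<and> dcond N F' G \<and> ((\<exists>k. G = (\<lambda>j. j i k)) \<or> dfun N G)"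
    using F assms is_local_coord by blast
qed




lemma sum_lessThan_add: "(\<Sum>i<(n::nat)+m. f i) = (\<Sum>i<n. f i) + (\<Sum>i<m. f (n+i))"
  by (induction m) (auto simp: add.assoc)

lemma coord_deriv:
  assumes "admissible N u" "i < N"
  shows "((\<lambda>y. jet_of u y i k) has_real_derivative jet_of u x i (Suc k)) (at x)"
proof -
  have "smooth_fn (u i)" using assms admissible_def by auto
  then have "(deriv ^^ k) (u i) differentiable (at x)" unfolding smooth_fn_def by blast
  then show ?thesis unfolding jet_of_def
    using DERIV_deriv_iff_real_differentiable by auto
qed

lemma dfun_sumprod:
  fixes n :: nat and G H :: "nat \<Rightarrow> jet \<Rightarrow> real"
  assumes "\<forall>i<n. dfun N (G i) \<and> dfun N (H i)"
  shows "dfun N (\<lambda>j. \<Sum>i<n. G i j * H i j)"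
proof (rule dfun.coinduct[where X="\<lambda>F. \<exists>(n::nat) (G::nat\<Rightarrow>jet\<Rightarrow>real) (H::nat\<Rightarrow>jet\<Rightarrow>real). (\<forall>i<n. dfun N (G i) \<and> dfun N (H i)) \<and> F = (\<lambda>j. \<Sum>i<n. G i j * H i j)"])
  show "\<exists>(n'::nat) (G'::nat\<Rightarrow>jet\<Rightarrow>real) (H'::nat\<Rightarrow>jet\<Rightarrow>real). (\<forall>i<n'. dfun N (G' i) \<and> dfun N (H' i)) \<and> (\<lambda>j. \<Sum>i<n. G i j * H i j) = (\<lambda>j. \<Sum>i<n'. G' i j * H' i j)"
    using assms by (intro exI[of _ n] exI[of _ G] exI[of _ H]) simp
next
  fix F :: "jet \<Rightarrow> real"
  assume "\<exists>(n::nat) (G::nat\<Rightarrow>jet\<Rightarrow>real) (H::nat\<Rightarrow>jet\<Rightarrow>real). (\<forall>i<n. dfun N (G i) \<and> dfun N (H i)) \<and> F = (\<lambda>j. \<Sum>i<n. G i j * H i j)"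
  then obtain n :: nat and G H :: "nat \<Rightarrow> jet \<Rightarrow> real" where GH: "\<forall>i<n. dfun N (G i) \<and> dfun N (H i)" and F: "F = (\<lambda>j. \<Sum>i<n. G i j * H i j)"
    by blast
  define G' where "G' i = (if i < n then Dv N (G i) else G (i - n))" for i
  define H' where "H' i = (if i < n then H i else Dv N (H (i - n)))" for i
  have loc: "is_local N F" unfolding F
    by (rule is_local_sum) (use GH dfun_local is_local_mult in auto)
  have GH': "\<forall>i<n+n. dfun N (G' i) \<and> dfun N (H' i)"
    using GH dfun_Dv(1) by (auto simp: G'_def H'_def)
  have dc: "dcond N F (\<lambda>j. \<Sum>i<n+n. G' i j * H' i j)"
    unfolding dcond_def
  proof (intro allI impI)
    fix u x assume adm: "admissible N u"
    have d: "((\<lambda>y. F (jet_of u y)) has_real_derivative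
       (\<Sum>i<n. G i (jet_of u x) * Dv N (H i) (jet_of u x) + Dv N (G i) (jet_of u x) * H i (jet_of u x))) (at x)"
      unfolding F
      by (rule DERIV_sum, rule DERIV_mult') (use GH dfun_deriv adm in auto)
    have "(\<Sum>i<n+n. G' i (jet_of u x) * H' i (jet_of u x)) =
       (\<Sum>i<n. G i (jet_of u x) * Dv N (H i) (jet_of u x) + Dv N (G i) (jet_of u x) * H i (jet_of u x))"
      unfolding sum_lessThan_add by (simp add: G'_def H'_def sum.distrib)
    then show "((\<lambda>y. F (jet_of u y)) has_real_derivative (\<Sum>i<n+n. G' i (jet_of u x) * H' i (jet_of u x))) (at x)"
      using d by simp
  qed
  show "\<exists>F' G. F = F' \<and> is_local N F' \<and> dcond N F' G \<and>
      ((\<exists>(n::nat) (G'::nat\<Rightarrow>jet\<Rightarrow>real) (H::nat\<Rightarrow>jet\<Rightarrow>real). (\<forall>i<n. dfun N (G' i) \<and> dfun N (H i)) \<and> G = (\<lambda>j. \<Sum>i<n. G' i j * H i j)) \<or> dfun N G)"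
    using loc dc GH' by blast
qed

lemma dfun_mult: "dfun N F \<Longrightarrow> dfun N G \<Longrightarrow> dfun N (\<lambda>j. F j * G j)"
  using dfun_sumprod[where n=1 and G="\<lambda>_. F" and N=N and H="\<lambda>_. G"] by (simp add: lessThan_Suc)

lemma dfun_add: "dfun N F \<Longrightarrow> dfun N G \<Longrightarrow> dfun N (\<lambda>j. F j + G j)"
proof -
  assume a: "dfun N F" "dfun N G"
  have "\<forall>i<(2::nat). dfun N ((\<lambda>i. if i = 0 then F else G) i) \<and> dfun N ((\<lambda>_ _. 1::real) i)"
    using a dfun_const by auto
  from dfun_sumprod[OF this] show ?thesis
    by (simp add: numeral_2_eq_2 lessThan_Suc add.commute)
qed

lemma dfun_diff: "dfun N F \<Longrightarrow> dfun N G \<Longrightarrow> dfun N (\<lambda>j. F j - G j)"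
proof -
  assume a: "dfun N F" "dfun N G"
  have "dfun N (\<lambda>j. (-1) * G j)" by (rule dfun_mult[OF dfun_const a(2)])
  then show ?thesis using dfun_add[OF a(1), of "\<lambda>j. (-1) * G j"] by simp
qed

lemma dfun_sum: "finite S \<Longrightarrow> (\<And>k. k \<in> S \<Longrightarrow> dfun N (f k)) \<Longrightarrow> dfun N (\<lambda>j. \<Sum>k\<in>S. f k j)"
proof (induction S rule: finite_induct)
  case empty then show ?case by (simp add: dfun_const)
next
  case (insert x F) then show ?case using dfun_add[of N "f x" "\<lambda>j. \<Sum>k\<in>F. f k j"] by simp
qed

lemma dfun_if: "dfun N F \<Longrightarrow> dfun N G \<Longrightarrow> dfun N (\<lambda>j. if P then F j else G j)"
  by (cases P) auto

lemma is_local_powr: assumes "0 < N" shows "is_local N (\<lambda>j. j 0 0 powr r)"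
  using is_local_comb[OF is_local_coord[OF assms, of 0] is_local_coord[OF assms, of 0], where f="\<lambda>a b. a powr r"] by simp

lemma dfun_powr:
  assumes "0 < N" shows "dfun N (\<lambda>j. j 0 0 powr r)"
proof -
  have "dfun N (\<lambda>j. \<Sum>i<Suc 0. (\<lambda>_ _. 1::real) i j * j 0 0 powr (\<lambda>_. r) i)"
  proof (rule dfun.coinduct[where X="\<lambda>F. \<exists>(n::nat) (G::nat\<Rightarrow>jet\<Rightarrow>real) r. (\<forall>i<n. dfun N (G i)) \<and> F = (\<lambda>j. \<Sum>i<n. G i j * j 0 0 powr r i)"])
    show "\<exists>(n::nat) (G::nat\<Rightarrow>jet\<Rightarrow>real) r'. (\<forall>i<n. dfun N (G i)) \<and> (\<lambda>j. \<Sum>i<Suc 0. (\<lambda>_ _. 1::real) i j * j 0 0 powr (\<lambda>_. r) i) = (\<lambda>j. \<Sum>i<n. G i j * j 0 0 powr r' i)"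
      using dfun_const by (intro exI[of _ "Suc 0"] exI[of _ "\<lambda>_ _. 1::real"] exI[of _ "\<lambda>_. r"]) (auto simp: lessThan_Suc)
  next
    fix F :: "jet \<Rightarrow> real"
    assume "\<exists>(n::nat) (G::nat\<Rightarrow>jet\<Rightarrow>real) r. (\<forall>i<n. dfun N (G i)) \<and> F = (\<lambda>j. \<Sum>i<n. G i j * j 0 0 powr r i)"
    then obtain n :: nat and G :: "nat \<Rightarrow> jet \<Rightarrow> real" and r where G: "\<forall>i<n. dfun N (G i)" and F: "F = (\<lambda>j. \<Sum>i<n. G i j * j 0 0 powr r i)"
      by blast
    define G' where "G' i = (if i < n then Dv N (G i) else (\<lambda>j. r (i - n) * G (i - n) j * j 0 1))" for i
    define r' where "r' i = (if i < n then r i else r (i - n) - 1)" for i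
    have loc: "is_local N F" unfolding F
      by (rule is_local_sum) (use G dfun_local is_local_mult is_local_powr assms in auto)
    have G': "\<forall>i<n+n. dfun N (G' i)"
      using G dfun_Dv(1) assms by (auto simp: G'_def intro!: dfun_mult dfun_const dfun_coord)
    have dc: "dcond N F (\<lambda>j. \<Sum>i<n+n. G' i j * j 0 0 powr r' i)"
      unfolding dcond_def
    proof (intro allI impI)
      fix u x assume adm: "admissible N u"
      have pos: "jet_of u x 0 0 > 0" using adm unfolding admissible_def jet_of_def by auto
      have d0: "((\<lambda>y. jet_of u y 0 0) has_real_derivative jet_of u x 0 (Suc 0)) (at x)"
        using coord_deriv[OF adm assms] .
      have d: "((\<lambda>y. F (jet_of u y)) has_real_derivative
         (\<Sum>i<n. G i (jet_of u x) * (r i * jet_of u x 0 0 powr (r i - of_nat 1) * jet_of u x 0 (Suc 0)) + Dv N (G i) (jet_of u x) * jet_of u x 0 0 powr r i)) (at x)"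
        unfolding F
        by (rule DERIV_sum, rule DERIV_mult') (use G dfun_deriv adm DERIV_fun_powr[OF d0 pos] in auto)
      have "(\<Sum>i<n+n. G' i (jet_of u x) * jet_of u x 0 0 powr r' i) =
         (\<Sum>i<n. G i (jet_of u x) * (r i * jet_of u x 0 0 powr (r i - of_nat 1) * jet_of u x 0 (Suc 0)) + Dv N (G i) (jet_of u x) * jet_of u x 0 0 powr r i)"
        unfolding sum_lessThan_add by (simp add: G'_def r'_def sum.distrib mult_ac)
      then show "((\<lambda>y. F (jet_of u y)) has_real_derivative (\<Sum>i<n+n. G' i (jet_of u x) * jet_of u x 0 0 powr r' i)) (at x)"
        using d by simp
    qed
    show "\<exists>F' Ga. F = F' \<and> is_local N F' \<and> dcond N F' Ga \<and>
       ((\<exists>(n::nat) (G::nat\<Rightarrow>jet\<Rightarrow>real) r. (\<forall>i<n. dfun N (G i)) \<and> Ga = (\<lambda>j. \<Sum>i<n. G i j * j 0 0 powr r i)) \<or> dfun N Ga)"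
      using loc dc G' by blast
  qed
  then show ?thesis by simp
qed




definition uf :: "nat \<Rightarrow> nat \<Rightarrow> jet \<Rightarrow> real" where
  "uf N i J = (if i < N then J i 0 else if i = N then -1 else 0)"
definition uf1 :: "nat \<Rightarrow> nat \<Rightarrow> jet \<Rightarrow> real" where
  "uf1 N i J = (if i < N then J i 1 else 0)"

definition Jf :: "nat \<Rightarrow> (nat \<Rightarrow> real) \<Rightarrow> nat \<Rightarrow> (jet \<Rightarrow> real) \<Rightarrow> jet \<Rightarrow> real" where
  "Jf N \<epsilon> i F J = epsc N \<epsilon> i / 4 * Dv N (Dv N (Dv N F)) J + uf N i J * Dv N F J + 1/2 * uf1 N i J * F J"

definition Sj :: "nat \<Rightarrow> (nat \<Rightarrow> real) \<Rightarrow> nat \<Rightarrow> (nat \<Rightarrow> jet \<Rightarrow> real) \<Rightarrow> nat \<Rightarrow> jet \<Rightarrow> real" where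
  "Sj N \<epsilon> i A m J = (\<Sum>k\<le>m. epsc N \<epsilon> i / 4 * (A k J * Dv N (Dv N (A (m-k))) J - 1/2 * (Dv N (A k) J * Dv N (A (m-k)) J))
        + 1/2 * uf N i J * A k J * A (m-k) J)"

definition stepP :: "nat \<Rightarrow> (nat \<Rightarrow> real) \<Rightarrow> (nat \<Rightarrow> jet \<Rightarrow> real) \<Rightarrow> nat \<Rightarrow> jet \<Rightarrow> real" where
  "stepP N \<epsilon> A n J = 1/2 * ((\<Sum>j\<in>{1..N}. if j \<le> n then Sj N \<epsilon> (N-j) A (n-j) J else 0)
        - 1/2 * (\<Sum>k\<in>{1..<n}. A k J * A (n-k) J))"

definition stepN :: "nat \<Rightarrow> (nat \<Rightarrow> real) \<Rightarrow> (nat \<Rightarrow> jet \<Rightarrow> real) \<Rightarrow> nat \<Rightarrow> jet \<Rightarrow> real" where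
  "stepN N \<epsilon> A n J = - (J 0 0 powr (-1/2)) * ((\<Sum>j\<in>{1..N}. if j \<le> n then Sj N \<epsilon> j A (n-j) J else 0)
        + 1/2 * uf N 0 J * (\<Sum>k\<in>{1..<n}. A k J * A (n-k) J))"

function aP :: "nat \<Rightarrow> (nat \<Rightarrow> real) \<Rightarrow> nat \<Rightarrow> jet \<Rightarrow> real" where
  "aP N \<epsilon> n = (if n = 0 then (\<lambda>_. 2) else stepP N \<epsilon> (\<lambda>k. if k < n then aP N \<epsilon> k else (\<lambda>_. 0)) n)"
  by pat_completeness auto
termination by (relation "Wellfounded.measure (\<lambda>(N,\<epsilon>,n). n)") auto

function bN :: "nat \<Rightarrow> (nat \<Rightarrow> real) \<Rightarrow> nat \<Rightarrow> jet \<Rightarrow> real" where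
  "bN N \<epsilon> n = (if n = 0 then (\<lambda>J. J 0 0 powr (-1/2)) else stepN N \<epsilon> (\<lambda>k. if k < n then bN N \<epsilon> k else (\<lambda>_. 0)) n)"
  by pat_completeness auto
termination by (relation "Wellfounded.measure (\<lambda>(N,\<epsilon>,n). n)") auto

declare aP.simps[simp del] bN.simps[simp del]

lemma Sj_cong: "(\<And>k. k \<le> m \<Longrightarrow> A k = A' k) \<Longrightarrow> Sj N \<epsilon> i A m = Sj N \<epsilon> i A' m"
  unfolding Sj_def by (intro ext sum.cong) auto

lemma stepP_cong: "(\<And>k. k < n \<Longrightarrow> A k = A' k) \<Longrightarrow> stepP N \<epsilon> A n = stepP N \<epsilon> A' n"
proof -
  assume h: "\<And>k. k < n \<Longrightarrow> A k = A' k"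
  have 1: "\<And>j. j \<in> {1..N} \<Longrightarrow> j \<le> n \<Longrightarrow> Sj N \<epsilon> (N-j) A (n-j) = Sj N \<epsilon> (N-j) A' (n-j)"
    by (rule Sj_cong) (use h in auto)
  have 2: "\<And>k. k \<in> {1..<n} \<Longrightarrow> A k = A' k \<and> A (n-k) = A' (n-k)" using h by auto
  show ?thesis unfolding stepP_def
    by (intro ext arg_cong2[where f="\<lambda>a b. 1/2 * (a - 1/2 * b)"] sum.cong refl) (use 1 2 in auto)
qed

lemma stepN_cong: "(\<And>k. k < n \<Longrightarrow> A k = A' k) \<Longrightarrow> stepN N \<epsilon> A n = stepN N \<epsilon> A' n"
proof -
  assume h: "\<And>k. k < n \<Longrightarrow> A k = A' k"
  have 1: "\<And>j. j \<in> {1..N} \<Longrightarrow> j \<le> n \<Longrightarrow> Sj N \<epsilon> j A (n-j) = Sj N \<epsilon> j A' (n-j)"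
    by (rule Sj_cong) (use h in auto)
  have 2: "\<And>k. k \<in> {1..<n} \<Longrightarrow> A k = A' k \<and> A (n-k) = A' (n-k)" using h by auto
  show ?thesis unfolding stepN_def
    by (intro ext arg_cong2[where f="\<lambda>a b. c * (a + d * b)" for c d] sum.cong refl) (use 1 2 in auto)
qed

lemma aP_0: "aP N \<epsilon> 0 = (\<lambda>_. 2)" by (simp add: aP.simps)
lemma aP_Suc: "0 < n \<Longrightarrow> aP N \<epsilon> n = stepP N \<epsilon> (aP N \<epsilon>) n"
  by (subst aP.simps) (auto intro: stepP_cong)
lemma bN_0: "bN N \<epsilon> 0 = (\<lambda>J. J 0 0 powr (-1/2))" by (simp add: bN.simps)
lemma bN_Suc: "0 < n \<Longrightarrow> bN N \<epsilon> n = stepN N \<epsilon> (bN N \<epsilon>) n"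
  by (subst bN.simps) (auto intro: stepN_cong)

lemma dfun_uf: "0 < N \<Longrightarrow> dfun N (uf N i)"
proof (cases "i < N")
  case True
  then have "uf N i = (\<lambda>J. J i 0)" by (simp add: uf_def fun_eq_iff)
  then show ?thesis using dfun_coord[OF True] by simp
next
  case False
  then have "uf N i = (\<lambda>J. if i = N then -1 else 0)" by (simp add: uf_def fun_eq_iff)
  then show ?thesis using dfun_const by simp
qed
lemma dfun_uf': "0 < N \<Longrightarrow> dfun N (\<lambda>J. uf N i J)"
  using dfun_uf by (simp add: eta_contract_eq)
lemma dfun_uf1: "0 < N \<Longrightarrow> dfun N (uf1 N i)"
proof (cases "i < N")
  case True
  then have "uf1 N i = (\<lambda>J. J i 1)" by (simp add: uf1_def fun_eq_iff)
  then show ?thesis using dfun_coord[OF True] by simp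
next
  case False
  then have "uf1 N i = (\<lambda>J. 0)" by (simp add: uf1_def fun_eq_iff)
  then show ?thesis using dfun_const by simp
qed

lemma dfun_Dv': "dfun N F \<Longrightarrow> dfun N (\<lambda>J. Dv N F J)"
  using dfun_Dv(1) by (simp add: eta_contract_eq)

lemma dfun_Sj:
  assumes "0 < N" "\<And>k. k \<le> m \<Longrightarrow> dfun N (A k)"
  shows "dfun N (Sj N \<epsilon> i A m)"
proof -
  have a: "\<And>k. k \<le> m \<Longrightarrow> dfun N (\<lambda>J. A k J)" using assms(2) by simp
  show ?thesis unfolding Sj_def
    by (intro dfun_sum finite_atMost dfun_add dfun_diff dfun_mult dfun_const dfun_Dv' a dfun_uf' assms(1)) auto
qed

lemma dfun_aP: assumes "0 < N" shows "dfun N (aP N \<epsilon> n)"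
proof (induction n rule: less_induct)
  case (less n)
  show ?case
  proof (cases "n = 0")
    case True then show ?thesis by (simp add: aP_0 dfun_const)
  next
    case False
    have a: "\<And>k. k < n \<Longrightarrow> dfun N (\<lambda>J. aP N \<epsilon> k J)" using less by simp
    have s: "\<And>j. j \<in> {1..N} \<Longrightarrow> dfun N (\<lambda>J. if j \<le> n then Sj N \<epsilon> (N-j) (aP N \<epsilon>) (n-j) J else 0)"
    proof (intro dfun_if dfun_const)
      fix j assume "j \<in> {1..N}"
      show "dfun N (\<lambda>J. Sj N \<epsilon> (N-j) (aP N \<epsilon>) (n-j) J)"
      proof -
        have kk: "\<And>k. k \<le> n - j \<Longrightarrow> dfun N (aP N \<epsilon> k)" using less False \<open>j \<in> {1..N}\<close> by auto
        show ?thesis using dfun_Sj[OF assms kk, where \<epsilon>=\<epsilon> and i="(N-j)"] by (simp add: eta_contract_eq)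
      qed
    qed
    show ?thesis unfolding aP_Suc[OF \<open>n \<noteq> 0\<close>[unfolded neq0_conv]] stepP_def
      by (intro dfun_mult dfun_const dfun_diff dfun_sum finite_atLeastAtMost finite_atLeastLessThan s a) auto
  qed
qed

lemma dfun_bN: assumes "0 < N" shows "dfun N (bN N \<epsilon> n)"
proof (induction n rule: less_induct)
  case (less n)
  show ?case
  proof (cases "n = 0")
    case True then show ?thesis by (simp add: bN_0 dfun_powr assms)
  next
    case False
    have a: "\<And>k. k < n \<Longrightarrow> dfun N (\<lambda>J. bN N \<epsilon> k J)" using less by simp
    have s: "\<And>j. j \<in> {1..N} \<Longrightarrow> dfun N (\<lambda>J. if j \<le> n then Sj N \<epsilon> j (bN N \<epsilon>) (n-j) J else 0)"
    proof (intro dfun_if dfun_const)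
      fix j assume "j \<in> {1..N}"
      show "dfun N (\<lambda>J. Sj N \<epsilon> j (bN N \<epsilon>) (n-j) J)"
      proof -
        have kk: "\<And>k. k \<le> n - j \<Longrightarrow> dfun N (bN N \<epsilon> k)" using less False \<open>j \<in> {1..N}\<close> by auto
        show ?thesis using dfun_Sj[OF assms kk, where \<epsilon>=\<epsilon> and i="j"] by (simp add: eta_contract_eq)
      qed
    qed
    have p: "dfun N (\<lambda>J. - (J 0 0 powr (-1/2)))"
      using dfun_mult[OF dfun_const[of N "-1"] dfun_powr[OF assms, of "-1/2"]] by simp
    show ?thesis unfolding bN_Suc[OF \<open>n \<noteq> 0\<close>[unfolded neq0_conv]] stepN_def
      by (intro dfun_mult p dfun_const dfun_add dfun_sum finite_atLeastAtMost finite_atLeastLessThan s a dfun_uf' assms) auto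
  qed
qed




lemma sum_refl: "(\<Sum>k\<le>m. f k (m - k)) = (\<Sum>k\<le>m. f (m - k) (k::nat))"
proof -
  have "(\<Sum>k\<le>m. f k (m - k)) = (\<Sum>k=0..m. f k (m - k))" by (simp add: atMost_atLeast0)
  also have "\<dots> = (\<Sum>k=0..m. f (m + 0 - k) (m - (m + 0 - k)))" by (rule sum.atLeastAtMost_rev)
  also have "\<dots> = (\<Sum>k=0..m. f (m - k) k)" by (intro sum.cong) auto
  finally show ?thesis by (simp add: atMost_atLeast0)
qed

lemma sum_split0: "(\<Sum>k\<le>n. f k) = f 0 + (\<Sum>k\<in>{1..n}. f (k::nat))"
  by (simp add: atMost_atLeast0 sum.atLeast_Suc_atMost)

lemma sum_split0n: "0 < n \<Longrightarrow> (\<Sum>k\<le>n. f k) = f 0 + f n + (\<Sum>k\<in>{1..<n}. f (k::nat))"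
  by (simp add: sum_split0 sum.last_plus add.assoc)

lemma swap_tri:
  "(\<Sum>j\<le>(N::nat). if j \<le> (n::nat) then (\<Sum>k\<le>n-j. f j k) else 0) = (\<Sum>k\<le>n. \<Sum>j\<le>N. if j \<le> n-k then f j k else (0::real))"
proof -
  have 1: "(if j \<le> n then (\<Sum>k\<le>n-j. f j k) else 0) = (\<Sum>k\<le>n. if j + k \<le> n then f j k else 0)" for j
  proof -
    have "{k \<in> {..n}. j + k \<le> n} = (if j \<le> n then {..n-j} else {})" by auto
    then show ?thesis using sum.inter_filter[of "{..n}" "f j" "\<lambda>k. j + k \<le> n"]
      by (auto split: if_splits)
  qed
  have 2: "(\<Sum>j\<le>N. if j \<le> n-k then f j k else 0) = (\<Sum>j\<le>N. if j + k \<le> n then f j k else 0)" if "k \<le> n" for k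
    using that by (intro sum.cong) auto
  show ?thesis unfolding 1 using 2 by (simp add: sum.swap[of _ "{..N}"])
qed

lemma E_zero:
  fixes a e :: "nat \<Rightarrow> real"
  assumes h: "\<And>n. (\<Sum>k\<le>n. a k * e (n - k)) = 0" and a0: "a 0 \<noteq> 0"
  shows "e n = 0"
proof (induction n rule: less_induct)
  case (less n)
  have "(\<Sum>k\<in>{1..n}. a k * e (n - k)) = 0"
    by (intro sum.neutral) (use less in auto)
  then have "a 0 * e n = 0" using h[of n] by (simp add: sum_split0)
  then show ?case using a0 by simp
qed

context
  fixes N :: nat and \<epsilon> :: "nat \<Rightarrow> real" and u :: "nat \<Rightarrow> real \<Rightarrow> real"
  assumes N: "0 < N" and adm: "admissible N u"
begin

lemma uf_jet: "fld N u i x = uf N i (jet_of u x)"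
  by (simp add: fld_def uf_def jet_of_def)

lemma uf_deriv: "((\<lambda>y. uf N i (jet_of u y)) has_real_derivative uf1 N i (jet_of u x)) (at x)"
proof (cases "i < N")
  case True
  then show ?thesis using coord_deriv[OF adm True, of 0 x] by (simp add: uf_def uf1_def)
next
  case False
  then show ?thesis by (simp add: uf_def uf1_def)
qed

lemma deriv_fld: "deriv (fld N u i) x = uf1 N i (jet_of u x)"
proof -
  have "fld N u i = (\<lambda>y. uf N i (jet_of u y))" using uf_jet by auto
  then show ?thesis using uf_deriv DERIV_imp_deriv by metis
qed

lemma Jf_Jop:
  assumes F: "dfun N F"
  shows "Jop N \<epsilon> u i (\<lambda>y. F (jet_of u y)) x = Jf N \<epsilon> i F (jet_of u x)"
proof -
  have 3: "(deriv ^^ 3) (\<lambda>y. F (jet_of u y)) = (\<lambda>y. Dv N (Dv N (Dv N F)) (jet_of u y))"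
    using dfun_derivk[OF F adm, of 3] by (simp add: numeral_3_eq_3)
  have 1: "deriv (\<lambda>y. F (jet_of u y)) = (\<lambda>y. Dv N F (jet_of u y))"
    using dfun_deriv_fun[OF F adm] .
  show ?thesis unfolding Jop_def Jf_def 3 1 uf_jet deriv_fld by simp
qed

lemma Dv_const_along:
  assumes F: "dfun N F" and c: "\<And>y. F (jet_of u y) = c"
  shows "Dv N F (jet_of u x) = 0" "\<And>y. Dv N F (jet_of u y) = 0"
proof -
  have "(\<lambda>y. F (jet_of u y)) = (\<lambda>y. c)" using c by auto
  then have "\<And>x. ((\<lambda>y. c) has_real_derivative Dv N F (jet_of u x)) (at x)" using dfun_deriv[OF F adm] by metis
  then have "\<And>y. Dv N F (jet_of u y) = 0" using DERIV_unique DERIV_const by blast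
  then show "Dv N F (jet_of u x) = 0" "\<And>y. Dv N F (jet_of u y) = 0" by blast+
qed

lemma Sj_deriv:
  assumes A: "\<And>k. dfun N (A k)"
  shows "((\<lambda>y. Sj N \<epsilon> i A m (jet_of u y)) has_real_derivative
     (\<Sum>k\<le>m. A k (jet_of u x) * Jf N \<epsilon> i (A (m-k)) (jet_of u x))) (at x)"
proof -
  define J where "J = jet_of u x"
  define c where "c = epsc N \<epsilon> i / 4"
  define a where "a k = A k J" for k
  define a1 where "a1 k = Dv N (A k) J" for k
  define a2 where "a2 k = Dv N (Dv N (A k)) J" for k
  define a3 where "a3 k = Dv N (Dv N (Dv N (A k))) J" for k
  define U where "U = uf N i J"
  define U1 where "U1 = uf1 N i J"
  have d0: "\<And>k. ((\<lambda>y. A k (jet_of u y)) has_real_derivative a1 k) (at x)"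
    unfolding a1_def J_def using dfun_deriv[OF A adm] .
  have d1: "\<And>k. ((\<lambda>y. Dv N (A k) (jet_of u y)) has_real_derivative a2 k) (at x)"
    unfolding a2_def J_def using dfun_deriv[OF dfun_Dv(1)[OF A] adm] .
  have d2: "\<And>k. ((\<lambda>y. Dv N (Dv N (A k)) (jet_of u y)) has_real_derivative a3 k) (at x)"
    unfolding a3_def J_def using dfun_deriv[OF dfun_Dv(1)[OF dfun_Dv(1)[OF A]] adm] .
  have du: "((\<lambda>y. uf N i (jet_of u y)) has_real_derivative U1) (at x)"
    unfolding U1_def J_def by (rule uf_deriv)
  define T' where "T' k = c * ((a k * a3 (m-k) + a1 k * a2 (m-k)) - 1/2 * (a1 k * a2 (m-k) + a2 k * a1 (m-k)))
      + 1/2 * ((U1 * a k + U * a1 k) * a (m-k) + U * a k * a1 (m-k))" for k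
  have dS: "((\<lambda>y. Sj N \<epsilon> i A m (jet_of u y)) has_real_derivative (\<Sum>k\<le>m. T' k)) (at x)"
    unfolding Sj_def
  proof (rule DERIV_sum)
    fix k assume "k \<in> {..m}"
    have e1: "((\<lambda>y. A k (jet_of u y) * Dv N (Dv N (A (m-k))) (jet_of u y)) has_real_derivative
        a k * a3 (m-k) + a1 k * a2 (m-k)) (at x)"
      using DERIV_mult'[OF d0[of k] d2[of "m-k"]] by (simp add: a_def a1_def a2_def a3_def J_def)
    have e2: "((\<lambda>y. Dv N (A k) (jet_of u y) * Dv N (A (m-k)) (jet_of u y)) has_real_derivative
        a1 k * a2 (m-k) + a2 k * a1 (m-k)) (at x)"
      using DERIV_mult'[OF d1[of k] d1[of "m-k"]] by (simp add: a_def a1_def a2_def a3_def J_def)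
    have e3: "((\<lambda>y. uf N i (jet_of u y) * A k (jet_of u y)) has_real_derivative U * a1 k + U1 * a k) (at x)"
      using DERIV_mult'[OF du d0[of k]] by (simp add: a_def a1_def a2_def a3_def U_def J_def)
    have e4: "((\<lambda>y. uf N i (jet_of u y) * A k (jet_of u y) * A (m-k) (jet_of u y)) has_real_derivative
        (U * a k) * a1 (m-k) + (U * a1 k + U1 * a k) * a (m-k)) (at x)"
      using DERIV_mult'[OF e3 d0[of "m-k"]] by (simp add: a_def a1_def a2_def a3_def U_def J_def)
    note e5 = DERIV_diff[OF e1 DERIV_cmult[OF e2, of "1/2"]]
    show "((\<lambda>y. epsc N \<epsilon> i / 4 * (A k (jet_of u y) * Dv N (Dv N (A (m - k))) (jet_of u y) -
                 1 / 2 * (Dv N (A k) (jet_of u y) * Dv N (A (m - k)) (jet_of u y))) +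
           1 / 2 * uf N i (jet_of u y) * A k (jet_of u y) * A (m - k) (jet_of u y)) has_real_derivative T' k) (at x)"
      using DERIV_add[OF DERIV_cmult[OF e5, of c] DERIV_cmult[OF e4, of "1/2"]]
      by (simp add: T'_def c_def mult.assoc algebra_simps)
  qed
  have s1: "(\<Sum>k\<le>m. a1 k * a2 (m-k)) = (\<Sum>k\<le>m. a2 k * a1 (m-k))"
    using sum_refl[of "\<lambda>k l. a1 k * a2 l" m] by (simp add: mult.commute)
  have s2: "(\<Sum>k\<le>m. a1 k * a (m-k)) = (\<Sum>k\<le>m. a k * a1 (m-k))"
    using sum_refl[of "\<lambda>k l. a1 k * a l" m] by (simp add: mult.commute)
  have "(\<Sum>k\<le>m. T' k) - (\<Sum>k\<le>m. a k * (c * a3 (m-k) + U * a1 (m-k) + 1/2 * U1 * a (m-k)))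
      = (\<Sum>k\<le>m. c/2 * (a1 k * a2 (m-k) - a2 k * a1 (m-k)) + U/2 * (a1 k * a (m-k) - a k * a1 (m-k)))"
    unfolding sum_subtractf[symmetric] by (intro sum.cong) (auto simp: T'_def algebra_simps)
  also have "\<dots> = c/2 * ((\<Sum>k\<le>m. a1 k * a2 (m-k)) - (\<Sum>k\<le>m. a2 k * a1 (m-k)))
      + U/2 * ((\<Sum>k\<le>m. a1 k * a (m-k)) - (\<Sum>k\<le>m. a k * a1 (m-k)))"
    by (simp add: sum.distrib sum_subtractf[symmetric] sum_distrib_left sum_divide_distrib[symmetric])
  also have "\<dots> = 0" using s1 s2 by simp
  finally have "(\<Sum>k\<le>m. T' k) = (\<Sum>k\<le>m. A k (jet_of u x) * Jf N \<epsilon> i (A (m-k)) (jet_of u x))"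
    by (simp add: Jf_def a_def a1_def a3_def U_def U1_def c_def J_def algebra_simps)
  then show ?thesis using dS by simp
qed

end




definition hg :: "nat \<Rightarrow> (nat \<Rightarrow> real) \<Rightarrow> (nat \<Rightarrow> nat) \<Rightarrow> (nat \<Rightarrow> jet \<Rightarrow> real) \<Rightarrow> nat \<Rightarrow> jet \<Rightarrow> real" where
  "hg N \<epsilon> \<sigma> A n J = (\<Sum>j\<le>N. if j \<le> n then Sj N \<epsilon> (\<sigma> j) A (n-j) J else 0)"

definition Eg :: "nat \<Rightarrow> (nat \<Rightarrow> real) \<Rightarrow> (nat \<Rightarrow> nat) \<Rightarrow> (nat \<Rightarrow> jet \<Rightarrow> real) \<Rightarrow> nat \<Rightarrow> jet \<Rightarrow> real" where
  "Eg N \<epsilon> \<sigma> A m J = (\<Sum>j\<le>N. if j \<le> m then Jf N \<epsilon> (\<sigma> j) (A (m-j)) J else 0)"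

lemma powr_half_sq: "(x::real) > 0 \<Longrightarrow> x * (x powr (-1/2)) * (x powr (-1/2)) = 1"
proof -
  assume x: "x > 0"
  have "x powr (-1/2) * x powr (-1/2) = x powr (-1)" using x by (simp add: powr_add[symmetric])
  then show ?thesis using x by (simp add: mult.assoc powr_minus)
qed

lemma hP_const: "hg N \<epsilon> (\<lambda>j. N - j) (aP N \<epsilon>) n J = (if n = 0 then -2 else 0)"
proof -
  define X where "X = (\<Sum>j\<in>{1..N}. if j \<le> n then Sj N \<epsilon> (N-j) (aP N \<epsilon>) (n-j) J else 0)"
  have S0: "Sj N \<epsilon> N (aP N \<epsilon>) n J = -1/2 * (\<Sum>k\<le>n. (aP N \<epsilon>) k J * (aP N \<epsilon>) (n-k) J)"
    by (simp add: Sj_def epsc_def uf_def sum_distrib_left)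
  have h: "hg N \<epsilon> (\<lambda>j. N - j) (aP N \<epsilon>) n J = Sj N \<epsilon> N (aP N \<epsilon>) n J + X"
    unfolding hg_def X_def by (subst sum_split0) simp
  show ?thesis
  proof (cases "n = 0")
    case True
    have "X = 0" unfolding X_def True by (intro sum.neutral) auto
    then show ?thesis using h S0 True by (simp add:  aP_0)
  next
    case False
    define Y where "Y = (\<Sum>k\<in>{1..<n}. (aP N \<epsilon>) k J * (aP N \<epsilon>) (n-k) J)"
    have an: "aP N \<epsilon> n J = 1/2 * (X - 1/2 * Y)"
      using aP_Suc[of n N \<epsilon>] False by (simp add:  X_def Y_def stepP_def)
    have S: "(\<Sum>k\<le>n. (aP N \<epsilon>) k J * (aP N \<epsilon>) (n-k) J) = 4 * (aP N \<epsilon>) n J + Y"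
      using False by (subst sum_split0n) (auto simp: Y_def  aP_0)
    have "hg N \<epsilon> (\<lambda>j. N - j) (aP N \<epsilon>) n J = 0" unfolding h S0 S an by (simp add: algebra_simps)
    then show ?thesis using False by simp
  qed
qed

lemma hN_const:
  assumes N: "0 < N" and J: "J 0 0 > 0"
  shows "hg N \<epsilon> (\<lambda>j. j) (bN N \<epsilon>) n J = (if n = 0 then 1/2 else 0)"
proof -
  define p where "p = J 0 0 powr (-1/2)"
  have pp: "J 0 0 * p * p = 1" using powr_half_sq[OF J] by (simp add: p_def)
  define X where "X = (\<Sum>j\<in>{1..N}. if j \<le> n then Sj N \<epsilon> j (bN N \<epsilon>) (n-j) J else 0)"
  have S0: "Sj N \<epsilon> 0 (bN N \<epsilon>) n J = 1/2 * J 0 0 * (\<Sum>k\<le>n. (bN N \<epsilon>) k J * (bN N \<epsilon>) (n-k) J)"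
    using N by (simp add: Sj_def epsc_def uf_def sum_distrib_left mult.assoc)
  have h: "hg N \<epsilon> (\<lambda>j. j) (bN N \<epsilon>) n J = Sj N \<epsilon> 0 (bN N \<epsilon>) n J + X"
    unfolding hg_def X_def by (subst sum_split0) simp
  show ?thesis
  proof (cases "n = 0")
    case True
    have "X = 0" unfolding X_def True by (intro sum.neutral) auto
    then show ?thesis using h S0 True pp by (simp add:  bN_0 p_def)
  next
    case False
    define Y where "Y = (\<Sum>k\<in>{1..<n}. (bN N \<epsilon>) k J * (bN N \<epsilon>) (n-k) J)"
    have an: "bN N \<epsilon> n J = - p * (X + 1/2 * J 0 0 * Y)"
      using bN_Suc[of n N \<epsilon>] False N by (simp add:  X_def Y_def stepN_def p_def uf_def)
    have "(\<Sum>k\<le>n. (bN N \<epsilon>) k J * (bN N \<epsilon>) (n-k) J) = 2 * p * (bN N \<epsilon>) n J + Y"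
      using False by (subst sum_split0n) (auto simp: Y_def  bN_0 p_def)
    then have "hg N \<epsilon> (\<lambda>j. j) (bN N \<epsilon>) n J = J 0 0 * p * (bN N \<epsilon>) n J + 1/2 * J 0 0 * Y + X"
      using h S0 by (simp add: algebra_simps)
    also have "\<dots> = - (J 0 0 * p * p) * (X + 1/2 * J 0 0 * Y) + 1/2 * J 0 0 * Y + X"
      unfolding an by (simp add: algebra_simps)
    also have "\<dots> = 0" using pp by simp
    finally show ?thesis using False by simp
  qed
qed

context
  fixes N :: nat and \<epsilon> :: "nat \<Rightarrow> real" and u :: "nat \<Rightarrow> real \<Rightarrow> real"
  assumes N: "0 < N" and adm: "admissible N u"
begin

lemma h_deriv:
  assumes A: "\<And>k. dfun N (A k)"
  shows "((\<lambda>y. hg N \<epsilon> \<sigma> A n (jet_of u y)) has_real_derivative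
     (\<Sum>k\<le>n. A k (jet_of u x) * Eg N \<epsilon> \<sigma> A (n-k) (jet_of u x))) (at x)"
proof -
  define J where "J = jet_of u x"
  define f where "f j k = A k J * Jf N \<epsilon> (\<sigma> j) (A (n - j - k)) J" for j k
  have d: "((\<lambda>y. hg N \<epsilon> \<sigma> A n (jet_of u y)) has_real_derivative
     (\<Sum>j\<le>N. if j \<le> n then (\<Sum>k\<le>n-j. f j k) else 0)) (at x)"
    unfolding hg_def
  proof (rule DERIV_sum)
    fix j assume "j \<in> {..N}"
    show "((\<lambda>y. if j \<le> n then Sj N \<epsilon> (\<sigma> j) A (n - j) (jet_of u y) else 0) has_real_derivative
        (if j \<le> n then \<Sum>k\<le>n - j. f j k else 0)) (at x)"
      using Sj_deriv[where A=A and i="\<sigma> j" and m="n - j" and x=x and \<epsilon>=\<epsilon>, OF N adm A] by (simp add: f_def J_def)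
  qed
  have "(\<Sum>j\<le>N. if j \<le> n then (\<Sum>k\<le>n-j. f j k) else 0) = (\<Sum>k\<le>n. \<Sum>j\<le>N. if j \<le> n-k then f j k else 0)"
    by (rule swap_tri)
  also have "\<dots> = (\<Sum>k\<le>n. A k J * Eg N \<epsilon> \<sigma> A (n-k) J)"
    unfolding Eg_def sum_distrib_left
    by (intro sum.cong refl) (auto simp: f_def add.commute)
  finally show ?thesis using d by (simp add: J_def)
qed

lemma E_vanish:
  assumes A: "\<And>k. dfun N (A k)" and hc: "\<And>n y. hg N \<epsilon> \<sigma> A n (jet_of u y) = c n"
    and a0: "A 0 (jet_of u x) \<noteq> 0"
  shows "Eg N \<epsilon> \<sigma> A n (jet_of u x) = 0"
proof -
  have "(\<Sum>k\<le>n. A k (jet_of u x) * Eg N \<epsilon> \<sigma> A (n-k) (jet_of u x)) = 0" for n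
  proof -
    have "(\<lambda>y. hg N \<epsilon> \<sigma> A n (jet_of u y)) = (\<lambda>y. c n)" using hc by auto
    then have "((\<lambda>y. c n) has_real_derivative (\<Sum>k\<le>n. A k (jet_of u x) * Eg N \<epsilon> \<sigma> A (n-k) (jet_of u x))) (at x)"
      using h_deriv[where A=A and \<sigma>=\<sigma> and n=n and x=x, OF A] by simp
    then show ?thesis using DERIV_unique DERIV_const by blast
  qed
  then show ?thesis using E_zero[of "\<lambda>k. A k (jet_of u x)" "\<lambda>m. Eg N \<epsilon> \<sigma> A m (jet_of u x)"] a0 by blast
qed

lemma EP_zero: "Eg N \<epsilon> (\<lambda>j. N - j) (aP N \<epsilon>) n (jet_of u x) = 0"
  by (rule E_vanish[where c="\<lambda>n. if n = 0 then -2 else 0"]) (use dfun_aP[OF N] hP_const aP_0 in auto)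

lemma EN_zero: "Eg N \<epsilon> (\<lambda>j. j) (bN N \<epsilon>) n (jet_of u x) = 0"
proof (rule E_vanish[where c="\<lambda>n. if n = 0 then 1/2 else 0"])
  show "\<And>k. dfun N (bN N \<epsilon> k)" using dfun_bN[OF N] .
  have pos: "\<And>y. jet_of u y 0 0 > 0" using adm by (simp add: admissible_def jet_of_def)
  show "\<And>n y. hg N \<epsilon> (\<lambda>j. j) (bN N \<epsilon>) n (jet_of u y) = (if n = 0 then 1/2 else 0)"
    using hN_const[OF N] pos by blast
  show "bN N \<epsilon> 0 (jet_of u x) \<noteq> 0" using pos[of x] by (simp add: bN_0)
qed

end




fun Kp :: "nat \<Rightarrow> (nat \<Rightarrow> real) \<Rightarrow> nat \<Rightarrow> nat \<Rightarrow> jet \<Rightarrow> real" where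
  "Kp N \<epsilon> 0 i = uf1 N (i-1)"
| "Kp N \<epsilon> (Suc s) i = (\<lambda>J. (if i = 1 then 0 else Kp N \<epsilon> s (i-1) J) + Jf N \<epsilon> (i-1) (aP N \<epsilon> (Suc s)) J)"

fun Kn :: "nat \<Rightarrow> (nat \<Rightarrow> real) \<Rightarrow> nat \<Rightarrow> nat \<Rightarrow> jet \<Rightarrow> real" where
  "Kn N \<epsilon> 0 i = (\<lambda>J. - Jf N \<epsilon> i (bN N \<epsilon> 0) J)"
| "Kn N \<epsilon> (Suc t) i = (\<lambda>J. (if i = N then 0 else Kn N \<epsilon> t (i+1) J) - Jf N \<epsilon> i (bN N \<epsilon> (Suc t)) J)"

definition Kfull :: "nat \<Rightarrow> (nat \<Rightarrow> real) \<Rightarrow> int \<Rightarrow> nat \<Rightarrow> jet \<Rightarrow> real" where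
  "Kfull N \<epsilon> s = (if 0 \<le> s then Kp N \<epsilon> (nat s) else Kn N \<epsilon> (nat (-s-1)))"

lemma sum_head1: "1 \<le> (i::nat) \<Longrightarrow> (\<Sum>j\<in>{1..i}. f j) = f 1 + (\<Sum>j\<in>{Suc 1..i}. f j)"
  by (rule sum.atLeast_Suc_atMost)

lemma dfun_uf1': "0 < N \<Longrightarrow> dfun N (\<lambda>J. uf1 N i J)"
  using dfun_uf1 by (simp add: eta_contract_eq)

lemma dfun_Jf: assumes "0 < N" "dfun N F" shows "dfun N (Jf N \<epsilon> i F)"
proof -
  have F: "dfun N (\<lambda>J. F J)" using assms(2) by (simp add: eta_contract_eq)
  show ?thesis unfolding Jf_def[abs_def]
    by (intro dfun_add dfun_mult dfun_const dfun_Dv' dfun_Dv(1) dfun_uf' dfun_uf1' assms F)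
qed

lemma local_Kp: "0 < N \<Longrightarrow> is_local N (Kp N \<epsilon> s i)"
proof (induction s arbitrary: i)
  case 0 then show ?case using dfun_local[OF dfun_uf1] by simp
next
  case (Suc s)
  have "is_local N (Jf N \<epsilon> (i-1) (aP N \<epsilon> (Suc s)))" using dfun_local dfun_Jf dfun_aP Suc.prems by blast
  then show ?case using Suc by (auto intro!: is_local_add is_local_if is_local_const)
qed

lemma local_Kn: "0 < N \<Longrightarrow> is_local N (Kn N \<epsilon> t i)"
proof (induction t arbitrary: i)
  case 0
  have "is_local N (Jf N \<epsilon> i (bN N \<epsilon> 0))" using dfun_local dfun_Jf dfun_bN 0 by blast
  then have "is_local N (\<lambda>J. 0 - Jf N \<epsilon> i (bN N \<epsilon> 0) J)"
    by (intro is_local_diff is_local_const) (simp add: eta_contract_eq)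
  then show ?case by simp
next
  case (Suc t)
  have "is_local N (Jf N \<epsilon> i (bN N \<epsilon> (Suc t)))" using dfun_local dfun_Jf dfun_bN Suc.prems by blast
  then show ?case using Suc by (auto intro!: is_local_diff is_local_if is_local_const)
qed

lemma local_Kfull: "0 < N \<Longrightarrow> is_local N (Kfull N \<epsilon> s i)"
  by (simp add: Kfull_def local_Kp local_Kn)

lemma KN_closed:
  assumes "i \<le> N"
  shows "Kn N \<epsilon> t i J = - (\<Sum>j\<in>{i..N}. if j - i \<le> t then Jf N \<epsilon> j (bN N \<epsilon> (t + i - j)) J else 0)"
  using assms
proof (induction t arbitrary: i)
  case 0
  have "(\<Sum>j\<in>{Suc i..N}. if j - i \<le> 0 then Jf N \<epsilon> j (bN N \<epsilon> (0 + i - j)) J else 0) = 0"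
    by (intro sum.neutral) auto
  then show ?case using 0 by (simp add: sum.atLeast_Suc_atMost)
next
  case (Suc t)
  show ?case
  proof (cases "i = N")
    case True then show ?thesis by simp
  next
    case False
    then have iN: "i + 1 \<le> N" using Suc.prems by simp
    have "(\<Sum>j\<in>{Suc i..N}. if j - i \<le> Suc t then Jf N \<epsilon> j (bN N \<epsilon> (Suc t + i - j)) J else 0)
       = (\<Sum>j\<in>{i+1..N}. if j - (i+1) \<le> t then Jf N \<epsilon> j (bN N \<epsilon> (t + (i+1) - j)) J else 0)"
      by (intro sum.cong) auto
    then show ?thesis using Suc.IH[OF iN] False Suc.prems by (simp add: sum.atLeast_Suc_atMost)
  qed
qed

context
  fixes N :: nat and \<epsilon> :: "nat \<Rightarrow> real" and u :: "nat \<Rightarrow> real \<Rightarrow> real"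
  assumes N: "0 < N" and adm: "admissible N u"
begin

lemma Jf_const_along:
  "Jf N \<epsilon> i (\<lambda>_. c) (jet_of u x) = 1/2 * uf1 N i (jet_of u x) * c"
proof -
  have d1: "\<And>y. Dv N (\<lambda>_. c) (jet_of u y) = 0"
    using Dv_const_along(2)[OF N adm dfun_const] by blast
  have d2: "\<And>y. Dv N (Dv N (\<lambda>_. c)) (jet_of u y) = 0"
    using Dv_const_along(2)[OF N adm dfun_Dv(1)[OF dfun_const] d1] by blast
  have d3: "Dv N (Dv N (Dv N (\<lambda>_. c))) (jet_of u x) = 0"
    using Dv_const_along(1)[OF N adm dfun_Dv(1)[OF dfun_Dv(1)[OF dfun_const]] d2] by blast
  show ?thesis unfolding Jf_def using d1 d3 by simp
qed

lemma KP_closed: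
  assumes "1 \<le> i"
  shows "Kp N \<epsilon> s i (jet_of u x) =
    (\<Sum>j\<in>{1..i}. if j \<le> Suc s then Jf N \<epsilon> (i-j) (aP N \<epsilon> (Suc s - j)) (jet_of u x) else 0)"
  using assms
proof (induction s arbitrary: i)
  case 0
  have z: "(\<Sum>j\<in>{Suc 1..i}. if j \<le> Suc 0 then Jf N \<epsilon> (i-j) (aP N \<epsilon> (Suc 0 - j)) (jet_of u x) else 0) = 0"
    by (intro sum.neutral) auto
  have "(\<Sum>j\<in>{1..i}. if j \<le> Suc 0 then Jf N \<epsilon> (i-j) (aP N \<epsilon> (Suc 0 - j)) (jet_of u x) else 0)
     = (if 1 \<le> Suc 0 then Jf N \<epsilon> (i-1) (aP N \<epsilon> (Suc 0 - 1)) (jet_of u x) else 0)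
       + (\<Sum>j\<in>{Suc 1..i}. if j \<le> Suc 0 then Jf N \<epsilon> (i-j) (aP N \<epsilon> (Suc 0 - j)) (jet_of u x) else 0)"
    by (rule sum.atLeast_Suc_atMost) (use 0 in simp)
  also have "\<dots> = Jf N \<epsilon> (i-1) (\<lambda>_. 2) (jet_of u x)" using z by (simp add: aP_0)
  also have "\<dots> = uf1 N (i-1) (jet_of u x)" using Jf_const_along[of "i-1" 2 x] by simp
  finally show ?case by simp
next
  case (Suc s)
  show ?case
  proof (cases "i = 1")
    case True then show ?thesis by simp
  next
    case False
    then have i1: "1 \<le> i - 1" using Suc.prems by simp
    have "(\<Sum>j\<in>{Suc 1..Suc (i-1)}. if j \<le> Suc (Suc s) then Jf N \<epsilon> (i-j) (aP N \<epsilon> (Suc (Suc s) - j)) (jet_of u x) else 0)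
      = (\<Sum>j\<in>{1..i-1}. if Suc j \<le> Suc (Suc s) then Jf N \<epsilon> (i - Suc j) (aP N \<epsilon> (Suc (Suc s) - Suc j)) (jet_of u x) else 0)"
      by (rule sum.shift_bounds_cl_Suc_ivl)
    also have "\<dots> = Kp N \<epsilon> s (i-1) (jet_of u x)"
      unfolding Suc.IH[OF i1] by (intro sum.cong) auto
    finally have e: "(\<Sum>j\<in>{Suc 1..i}. if j \<le> Suc (Suc s) then Jf N \<epsilon> (i-j) (aP N \<epsilon> (Suc (Suc s) - j)) (jet_of u x) else 0)
       = Kp N \<epsilon> s (i-1) (jet_of u x)" using Suc.prems by simp
    show ?thesis by (subst sum_head1[OF Suc.prems]) (use False e in simp)
  qed
qed

lemma KP_deriv:
  "((\<lambda>y. aP N \<epsilon> (Suc s) (jet_of u y)) has_real_derivative Kp N \<epsilon> s N (jet_of u x)) (at x)"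
proof -
  define J where "J = jet_of u x"
  have N1: "1 \<le> N" using N by simp
  have "Eg N \<epsilon> (\<lambda>j. N - j) (aP N \<epsilon>) (Suc s) J = 0" unfolding J_def by (rule EP_zero[OF N adm])
  then have "Jf N \<epsilon> N (aP N \<epsilon> (Suc s)) J + Kp N \<epsilon> s N J = 0"
    unfolding Eg_def J_def KP_closed[of N s x, OF N1]
    by (subst (asm) sum_split0) simp
  moreover have "Jf N \<epsilon> N (aP N \<epsilon> (Suc s)) J = - Dv N (aP N \<epsilon> (Suc s)) J"
    by (simp add: Jf_def epsc_def uf_def uf1_def)
  ultimately have "Dv N (aP N \<epsilon> (Suc s)) J = Kp N \<epsilon> s N J" by simp
  then show ?thesis using dfun_deriv[OF dfun_aP[OF N] adm] J_def by metis
qed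

lemma KN_J0: "Jf N \<epsilon> 0 (bN N \<epsilon> (Suc t)) (jet_of u x) = Kn N \<epsilon> t 1 (jet_of u x)"
proof -
  define J where "J = jet_of u x"
  have "Eg N \<epsilon> (\<lambda>j. j) (bN N \<epsilon>) (Suc t) J = 0" unfolding J_def by (rule EN_zero[OF N adm])
  then have 1: "Jf N \<epsilon> 0 (bN N \<epsilon> (Suc t)) J + (\<Sum>j\<in>{1..N}. if j \<le> Suc t then Jf N \<epsilon> j (bN N \<epsilon> (Suc t - j)) J else 0) = 0"
    unfolding Eg_def by (subst (asm) sum_split0) simp
  have "(\<Sum>j\<in>{1..N}. if j \<le> Suc t then Jf N \<epsilon> j (bN N \<epsilon> (Suc t - j)) J else 0)
     = (\<Sum>j\<in>{1..N}. if j - 1 \<le> t then Jf N \<epsilon> j (bN N \<epsilon> (t + 1 - j)) J else 0)"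
    by (intro sum.cong) auto
  then show ?thesis using 1 KN_closed[of 1 N \<epsilon> t J] N J_def by simp
qed

end




lemma inv_sqrt_powr: "(x::real) > 0 \<Longrightarrow> x powr (- (1/2)) = 1 / sqrt x"
  by (simp add: powr_minus_divide powr_half_sqrt[symmetric])

theorem mainTheorem6:
  fixes N :: nat and \<epsilon> :: "nat \<Rightarrow> real"
  assumes "N \<ge> 1"
  shows "\<exists>K. cKdV_hierarchy N \<epsilon> K \<and> (\<forall>s::int. \<forall>i\<in>{1..N}. is_local N (K s i))"
proof (intro exI conjI)
  have N: "0 < N" using assms by simp
  show "\<forall>s::int. \<forall>i\<in>{1..N}. is_local N (Kfull N \<epsilon> s i)" using local_Kfull[OF N] by blast
  show "cKdV_hierarchy N \<epsilon> (Kfull N \<epsilon>)"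
    unfolding cKdV_hierarchy_def
  proof (intro conjI allI impI ballI)
    fix u x i assume adm: "admissible N u" and i: "i \<in> {1..N}"
    show "Kfull N \<epsilon> 0 i (jet_of u x) = deriv (u (i - 1)) x"
    proof -
      have "i - 1 < N" using i by auto
      then show ?thesis by (simp add: Kfull_def uf1_def jet_of_def)
    qed
    have pos: "\<And>y. u 0 y > 0" using adm by (simp add: admissible_def)
    have f: "(\<lambda>y. bN N \<epsilon> 0 (jet_of u y)) = (\<lambda>y. 1 / sqrt (u 0 y))"
      using pos by (simp add: bN_0 jet_of_def inv_sqrt_powr)
    show "Kfull N \<epsilon> (-1) i (jet_of u x) = - Jop N \<epsilon> u i (\<lambda>y. 1 / sqrt (u 0 y)) x"
      using Jf_Jop[OF N adm dfun_bN[OF N, where \<epsilon>=\<epsilon> and n=0], where \<epsilon>=\<epsilon> and i=i and x=x] f by (simp add: Kfull_def)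
  next
    fix s :: int assume s: "0 \<le> s"
    show "\<exists>w. \<forall>u. admissible N u \<longrightarrow>
         smooth_fn (\<lambda>y. w (jet_of u y)) \<and>
         (\<forall>x. ((\<lambda>y. w (jet_of u y)) has_real_derivative Kfull N \<epsilon> s N (jet_of u x)) (at x)) \<and>
         (\<forall>x. \<forall>i\<in>{1..N}. Kfull N \<epsilon> (s + 1) i (jet_of u x) =
              (if i = 1 then 0 else Kfull N \<epsilon> s (i - 1) (jet_of u x))
              + Jop N \<epsilon> u (i - 1) (\<lambda>y. w (jet_of u y)) x)"
    proof (intro exI allI impI conjI ballI)
      fix u x i assume adm: "admissible N u"
      show "smooth_fn (\<lambda>y. aP N \<epsilon> (Suc (nat s)) (jet_of u y))"
        by (rule dfun_smooth[OF dfun_aP[OF N] adm])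
      show "((\<lambda>y. aP N \<epsilon> (Suc (nat s)) (jet_of u y)) has_real_derivative Kfull N \<epsilon> s N (jet_of u x)) (at x)"
        using KP_deriv[OF N adm, where \<epsilon>=\<epsilon> and s="nat s" and x=x] s by (simp add: Kfull_def)
      have ns: "nat (s + 1) = Suc (nat s)" using s by simp
      show "Kfull N \<epsilon> (s + 1) i (jet_of u x) =
              (if i = 1 then 0 else Kfull N \<epsilon> s (i - 1) (jet_of u x))
              + Jop N \<epsilon> u (i - 1) (\<lambda>y. aP N \<epsilon> (Suc (nat s)) (jet_of u y)) x"
        using s Jf_Jop[OF N adm dfun_aP[OF N, where \<epsilon>=\<epsilon> and n="Suc (nat s)"], where \<epsilon>=\<epsilon> and i="i-1" and x=x]
        by (simp add: Kfull_def ns)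
    qed
  next
    fix s :: int assume s: "s \<le> -1"
    define t where "t = nat (-s-1)"
    have Ks: "Kfull N \<epsilon> s = Kn N \<epsilon> t" using s by (simp add: Kfull_def t_def)
    have Ks1: "Kfull N \<epsilon> (s - 1) = Kn N \<epsilon> (Suc t)"
    proof -
      have "nat (- (s - 1) - 1) = Suc t" using s by (simp add: t_def)
      then show ?thesis using s by (simp add: Kfull_def)
    qed
    show "\<exists>z. \<forall>u. admissible N u \<longrightarrow>
         smooth_fn (\<lambda>y. z (jet_of u y)) \<and>
         (\<forall>x. Jop N \<epsilon> u 0 (\<lambda>y. z (jet_of u y)) x = Kfull N \<epsilon> s 1 (jet_of u x)) \<and>
         (\<forall>x. \<forall>i\<in>{1..N}. Kfull N \<epsilon> (s - 1) i (jet_of u x) =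
              (if i = N then 0 else Kfull N \<epsilon> s (i + 1) (jet_of u x))
              - Jop N \<epsilon> u i (\<lambda>y. z (jet_of u y)) x)"
    proof (intro exI allI impI conjI ballI)
      fix u x i assume adm: "admissible N u"
      show "smooth_fn (\<lambda>y. bN N \<epsilon> (Suc t) (jet_of u y))"
        by (rule dfun_smooth[OF dfun_bN[OF N] adm])
      show "Jop N \<epsilon> u 0 (\<lambda>y. bN N \<epsilon> (Suc t) (jet_of u y)) x = Kfull N \<epsilon> s 1 (jet_of u x)"
        using Jf_Jop[OF N adm dfun_bN[OF N, where \<epsilon>=\<epsilon> and n="Suc t"], where \<epsilon>=\<epsilon> and i=0 and x=x] KN_J0[OF N adm, where \<epsilon>=\<epsilon> and t=t and x=x]
        by (simp add: Ks)
      show "Kfull N \<epsilon> (s - 1) i (jet_of u x) =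
              (if i = N then 0 else Kfull N \<epsilon> s (i + 1) (jet_of u x))
              - Jop N \<epsilon> u i (\<lambda>y. bN N \<epsilon> (Suc t) (jet_of u y)) x"
        using Jf_Jop[OF N adm dfun_bN[OF N, where \<epsilon>=\<epsilon> and n="Suc t"], where \<epsilon>=\<epsilon> and i=i and x=x]
        by (simp add: Ks Ks1)
    qed
  qed
qed


end
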